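(* Let $\mathbb{F}$ be any field of characteristic zero, let $G=\langle S\rangle\le\mathrm{GL}(n,\mathbb{F})$ with $S$ finite, let $R$ be the subring of $\mathbb{F}$ generated by the entries of the matrices in $S\cup S^{-1}$, and let $\psi_\rho$ be an SW-homomorphism on $\mathrm{GL}(n,R)$. Then $G$ is central-by-finite if and only if $G_\rho$ is central in $G$.
   Context: For an ideal $\rho$ of $R$, $\psi_\rho:\mathrm{GL}(n,R)\to\mathrm{GL}(n,R/\rho)$ is the homomorphism induced by the natural projection $R\to R/\rho$, and $G_\rho$ is the kernel of $\psi_\rho$ on $G$. $\psi_\rho$ is an SW-homomorphism if $R/\rho$ is finite (so $\psi_\rho$ has finite image) and every element of finite order in the kernel of $\psi_\rho$ on $\mathrm{GL}(n,R)$ is unipotent. $G$ is central-by-finite if its centre has finite index in $G$. *)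

theory Defs
  imports "HOL-Analysis.Analysis"
begin

(* Matrices over a field: 'a^'n^'n, with the finite type 'n indexing {1..n}. *)

primrec mpow :: "'a::semiring_1^'n^'n \<Rightarrow> nat \<Rightarrow> 'a^'n^'n" where
  "mpow A 0 = mat 1"
| "mpow A (Suc k) = A ** mpow A k"

definition GL_field :: "('a::field^'n^'n) set" where
  "GL_field = {A. invertible A}"

definition subring_gen :: "'a::comm_ring_1 set \<Rightarrow> 'a set" where
  "subring_gen X = \<Inter> {T. X \<subseteq> T \<and> 1 \<in> T \<and> (\<forall>x\<in>T. \<forall>y\<in>T. x + y \<in> T \<and> x - y \<in> T \<and> x * y \<in> T)}"

definition group_gen :: "('a::field^'n^'n) set \<Rightarrow> ('a^'n^'n) set" where
  "group_gen S = \<Inter> {H. S \<subseteq> H \<and> mat 1 \<in> H \<and>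
      (\<forall>x\<in>H. \<forall>y\<in>H. x ** y \<in> H) \<and> (\<forall>x\<in>H. matrix_inv x \<in> H)}"

definition entries :: "('a^'n^'n) set \<Rightarrow> 'a set" where
  "entries M = {A $ i $ j | A i j. A \<in> M}"

definition GL_ring :: "'a::field set \<Rightarrow> ('a^'n^'n) set" where
  "GL_ring R = {A. invertible A \<and> (\<forall>i j. A $ i $ j \<in> R) \<and> (\<forall>i j. matrix_inv A $ i $ j \<in> R)}"

definition is_ideal :: "'a::comm_ring_1 set \<Rightarrow> 'a set \<Rightarrow> bool" where
  "is_ideal R \<rho> \<longleftrightarrow> \<rho> \<subseteq> R \<and> 0 \<in> \<rho> \<and> (\<forall>x\<in>\<rho>. \<forall>y\<in>\<rho>. x + y \<in> \<rho> \<and> - x \<in> \<rho>)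
      \<and> (\<forall>r\<in>R. \<forall>x\<in>\<rho>. r * x \<in> \<rho>)"

definition quot_ring_carrier :: "'a::comm_ring_1 set \<Rightarrow> 'a set \<Rightarrow> 'a set set" where
  "quot_ring_carrier R \<rho> = (\<lambda>x. {y \<in> R. x - y \<in> \<rho>}) ` R"

definition psi_kernel :: "'a::comm_ring_1 set \<Rightarrow> ('a^'n^'n) set \<Rightarrow> ('a^'n^'n) set" where
  "psi_kernel \<rho> M = {A \<in> M. \<forall>i j. A $ i $ j - mat 1 $ i $ j \<in> \<rho>}"

definition finite_order :: "'a::semiring_1^'n^'n \<Rightarrow> bool" where
  "finite_order A \<longleftrightarrow> (\<exists>k>0. mpow A k = mat 1)"

definition unipotent :: "'a::comm_ring_1^'n^'n \<Rightarrow> bool" where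
  "unipotent A \<longleftrightarrow> (\<exists>k. mpow (A - mat 1) k = 0)"

definition SW_hom :: "'a::field set \<Rightarrow> 'a set \<Rightarrow> ('n::finite) itself \<Rightarrow> bool" where
  "SW_hom R \<rho> _ \<longleftrightarrow> finite (quot_ring_carrier R \<rho>) \<and>
     (\<forall>A \<in> psi_kernel \<rho> (GL_ring R :: ('a^'n^'n) set). finite_order A \<longrightarrow> unipotent A)"

definition centre :: "('a::semiring_1^'n^'n) set \<Rightarrow> ('a^'n^'n) set" where
  "centre G = {z \<in> G. \<forall>g\<in>G. z ** g = g ** z}"

(* G is central-by-finite: its centre has finite index (finitely many cosets gZ) *)
definition central_by_finite :: "('a::semiring_1^'n^'n) set \<Rightarrow> bool" where
  "central_by_finite G \<longleftrightarrow> finite ((\<lambda>g. (\<lambda>z. g ** z) ` centre G) ` G)"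

end

theory Submission
  imports Defs "HOL-Algebra.FiniteProduct"
begin

lemma (in group) transfer_torsion:
  fixes g h
  defines "Z \<equiv> {z \<in> carrier G. \<forall>x\<in>carrier G. z \<otimes> x = x \<otimes> z}"
  assumes fin: "finite ((\<lambda>x. (\<lambda>z. x \<otimes> z) ` Z) ` carrier G)"
    and g: "g \<in> carrier G" and h: "h \<in> carrier G"
  shows "\<exists>k::nat>0. (g \<otimes> h \<otimes> inv g \<otimes> inv h) [^] k = \<one>"
proof -
  define cs where "cs x = (\<lambda>z. x \<otimes> z) ` Z" for x
  define C where "C = cs ` carrier G"
  define act where "act x X = (\<lambda>w. x \<otimes> w) ` X" for x X
  have finC: "finite C" using fin by (simp add: C_def cs_def)
  have ZG: "Z \<subseteq> carrier G" by (auto simp: Z_def)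
  have Z1: "\<one> \<in> Z" by (auto simp: Z_def)
  have Zm: "x \<otimes> y \<in> Z" if "x \<in> Z" "y \<in> Z" for x y
  proof -
    have xy: "x \<in> carrier G" "y \<in> carrier G" using that by (auto simp: Z_def)
    have "x \<otimes> y \<otimes> w = w \<otimes> (x \<otimes> y)" if w: "w \<in> carrier G" for w
    proof -
      have "x \<otimes> y \<otimes> w = x \<otimes> (w \<otimes> y)" using that xy w \<open>y \<in> Z\<close> by (simp add: m_assoc Z_def)
      also have "\<dots> = (x \<otimes> w) \<otimes> y" using xy w by (simp add: m_assoc)
      also have "\<dots> = (w \<otimes> x) \<otimes> y" using \<open>x \<in> Z\<close> w by (simp add: Z_def)
      finally show ?thesis using xy w by (simp add: m_assoc)
    qed
    thus ?thesis using xy by (simp add: Z_def)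
  qed
  have Zi: "inv x \<in> Z" if "x \<in> Z" for x
  proof -
    have x: "x \<in> carrier G" using that ZG by auto
    have "inv x \<otimes> y = y \<otimes> inv x" if y: "y \<in> carrier G" for y
    proof -
      have "x \<otimes> y = y \<otimes> x" using \<open>x \<in> Z\<close> y by (auto simp: Z_def)
      note eq = this
      have "inv x \<otimes> y = inv x \<otimes> (y \<otimes> x) \<otimes> inv x" using x y by (simp add: m_assoc)
      also have "\<dots> = inv x \<otimes> (x \<otimes> y) \<otimes> inv x" by (simp add: eq)
      also have "\<dots> = y \<otimes> inv x" using x y by (simp add: m_assoc[symmetric])
      finally show ?thesis .
    qed
    thus ?thesis using x by (auto simp: Z_def)
  qed
  have Zc: "z \<otimes> x = x \<otimes> z" if "z \<in> Z" "x \<in> carrier G" for z x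
    using that by (auto simp: Z_def)
  have cs_mem: "x \<in> cs x" if "x \<in> carrier G" for x
    using that Z1 by (auto simp: cs_def intro!: image_eqI[of _ _ \<one>])
  have cs_eq: "cs a = cs b \<longleftrightarrow> inv a \<otimes> b \<in> Z" if a: "a \<in> carrier G" and b: "b \<in> carrier G" for a b
  proof
    assume "cs a = cs b"
    hence "b \<in> cs a" using cs_mem b by auto
    then obtain z where z: "z \<in> Z" "b = a \<otimes> z" by (auto simp: cs_def)
    hence "inv a \<otimes> b = z" using a ZG by (auto simp: m_assoc[symmetric])
    thus "inv a \<otimes> b \<in> Z" using z by simp
  next
    assume w: "inv a \<otimes> b \<in> Z"
    have bb: "b = a \<otimes> (inv a \<otimes> b)" using a b by (simp add: m_assoc[symmetric])
    have ab: "a = b \<otimes> inv (inv a \<otimes> b)" using a b by (simp add: inv_mult_group m_assoc[symmetric])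
    show "cs a = cs b"
    proof
      show "cs a \<subseteq> cs b"
      proof
        fix y assume "y \<in> cs a"
        then obtain z where z: "z \<in> Z" "y = a \<otimes> z" by (auto simp: cs_def)
        hence "y = b \<otimes> (inv (inv a \<otimes> b) \<otimes> z)" using ab a b ZG
          by (metis inv_closed m_assoc m_closed subsetD)
        thus "y \<in> cs b" using z w Zi Zm by (auto simp: cs_def)
      qed
      show "cs b \<subseteq> cs a"
      proof
        fix y assume "y \<in> cs b"
        then obtain z where z: "z \<in> Z" "y = b \<otimes> z" by (auto simp: cs_def)
        hence "y = a \<otimes> ((inv a \<otimes> b) \<otimes> z)" using bb a b ZG
          by (metis inv_closed m_assoc m_closed subsetD)
        thus "y \<in> cs a" using z w Zm by (auto simp: cs_def)
      qed
    qed
  qed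
  have act_cs: "act x (cs y) = cs (x \<otimes> y)" if "x \<in> carrier G" "y \<in> carrier G" for x y
    using that ZG unfolding act_def cs_def image_image
    by (intro image_cong) (auto simp: m_assoc)
  have act_C: "act x X \<in> C" if "x \<in> carrier G" "X \<in> C" for x X
    using that act_cs by (auto simp: C_def)
  have act_mult: "act (x \<otimes> y) X = act x (act y X)" if "x \<in> carrier G" "y \<in> carrier G" "X \<in> C" for x y X
  proof -
    have XG: "X \<subseteq> carrier G" using that ZG by (auto simp: C_def cs_def)
    show ?thesis unfolding act_def image_image
      by (rule image_cong) (use XG that in \<open>auto simp: m_assoc\<close>)
  qed
  have act_one: "act \<one> X = X" if "X \<in> C" for X
  proof -
    have XG: "X \<subseteq> carrier G" using that ZG by (auto simp: C_def cs_def)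
    have "act \<one> X = (\<lambda>w. w) ` X" unfolding act_def
      by (rule image_cong) (use XG in auto)
    thus ?thesis by simp
  qed
  define rep where "rep X = (SOME y. y \<in> carrier G \<and> cs y = X)" for X
  have rep: "rep X \<in> carrier G \<and> cs (rep X) = X" if "X \<in> C" for X
  proof -
    from that obtain y where y: "y \<in> carrier G" "cs y = X" by (auto simp: C_def)
    show ?thesis unfolding rep_def by (rule someI[where x=y]) (use y in simp)
  qed
  define \<tau> where "\<tau> x X = inv (rep (act x X)) \<otimes> x \<otimes> rep X" for x X
  have \<tau>Z: "\<tau> x X \<in> Z" if x: "x \<in> carrier G" and X: "X \<in> C" for x X
  proof -
    have r1: "rep X \<in> carrier G" "cs (rep X) = X" using rep X by auto
    have r2: "rep (act x X) \<in> carrier G" "cs (rep (act x X)) = act x X" using rep act_C x X by auto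
    have "cs (rep (act x X)) = cs (x \<otimes> rep X)" using r1 r2 act_cs x by metis
    hence "inv (rep (act x X)) \<otimes> (x \<otimes> rep X) \<in> Z" using cs_eq r1 r2 x by simp
    thus ?thesis using r1 r2 x by (simp add: \<tau>_def m_assoc)
  qed
  define Zg where "Zg = G\<lparr>carrier := Z\<rparr>"
  have cZg: "comm_group Zg"
    unfolding Zg_def
  proof (rule comm_groupI)
    fix x y z assume "x \<in> carrier (G\<lparr>carrier := Z\<rparr>)" "y \<in> carrier (G\<lparr>carrier := Z\<rparr>)"
      "z \<in> carrier (G\<lparr>carrier := Z\<rparr>)"
    hence xyz: "x \<in> Z" "y \<in> Z" "z \<in> Z" by simp_all
    hence "x \<in> carrier G" "y \<in> carrier G" "z \<in> carrier G" using ZG by auto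
    thus "x \<otimes>\<^bsub>G\<lparr>carrier := Z\<rparr>\<^esub> y \<otimes>\<^bsub>G\<lparr>carrier := Z\<rparr>\<^esub> z =
      x \<otimes>\<^bsub>G\<lparr>carrier := Z\<rparr>\<^esub> (y \<otimes>\<^bsub>G\<lparr>carrier := Z\<rparr>\<^esub> z)" by (simp add: m_assoc)
  next
    fix x y assume "x \<in> carrier (G\<lparr>carrier := Z\<rparr>)" "y \<in> carrier (G\<lparr>carrier := Z\<rparr>)"
    hence xy: "x \<in> Z" "y \<in> Z" by simp_all
    thus "x \<otimes>\<^bsub>G\<lparr>carrier := Z\<rparr>\<^esub> y \<in> carrier (G\<lparr>carrier := Z\<rparr>)" using Zm by simp
    show "x \<otimes>\<^bsub>G\<lparr>carrier := Z\<rparr>\<^esub> y = y \<otimes>\<^bsub>G\<lparr>carrier := Z\<rparr>\<^esub> x"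
      using xy ZG Zc by auto
  next
    show "\<one>\<^bsub>G\<lparr>carrier := Z\<rparr>\<^esub> \<in> carrier (G\<lparr>carrier := Z\<rparr>)" using Z1 by simp
  next
    fix x assume "x \<in> carrier (G\<lparr>carrier := Z\<rparr>)"
    hence x: "x \<in> Z" by simp
    hence "x \<in> carrier G" using ZG by auto
    thus "\<one>\<^bsub>G\<lparr>carrier := Z\<rparr>\<^esub> \<otimes>\<^bsub>G\<lparr>carrier := Z\<rparr>\<^esub> x = x" by simp
    show "\<exists>y\<in>carrier (G\<lparr>carrier := Z\<rparr>). y \<otimes>\<^bsub>G\<lparr>carrier := Z\<rparr>\<^esub> x = \<one>\<^bsub>G\<lparr>carrier := Z\<rparr>\<^esub>"
      using x Zi \<open>x \<in> carrier G\<close> by (intro bexI[of _ "inv x"]) auto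
  qed
  then interpret Zg: comm_group Zg .
  have Zg_mult: "x \<otimes>\<^bsub>Zg\<^esub> y = x \<otimes> y" for x y by (simp add: Zg_def)
  have Zg_one: "\<one>\<^bsub>Zg\<^esub> = \<one>" by (simp add: Zg_def)
  have Zg_pow: "x [^]\<^bsub>Zg\<^esub> (n::nat) = x [^] n" for x n
    unfolding Zg_def by (rule nat_pow_consistent[symmetric])
  define V where "V x = finprod Zg (\<tau> x) C" for x
  have VZ: "V x \<in> Z" if "x \<in> carrier G" for x
    using Zg.finprod_closed[of "\<tau> x" C] \<tau>Z that by (auto simp: V_def Zg_def)
  have \<tau>mult: "\<tau> (x \<otimes> y) X = \<tau> x (act y X) \<otimes> \<tau> y X"
    if x: "x \<in> carrier G" and y: "y \<in> carrier G" and X: "X \<in> C" for x y X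
  proof -
    have r1: "rep X \<in> carrier G" using rep X by auto
    have r2: "rep (act y X) \<in> carrier G" using rep act_C y X by auto
    have r3: "rep (act x (act y X)) \<in> carrier G" using rep act_C x y X by auto
    show ?thesis unfolding \<tau>_def act_mult[OF x y X]
      using r1 r2 r3 x y by (simp add: m_assoc, simp add: m_assoc[symmetric])
  qed
  have inj: "inj_on (act y) C" if y: "y \<in> carrier G" for y
  proof (rule inj_onI)
    fix X Y assume XY: "X \<in> C" "Y \<in> C" "act y X = act y Y"
    hence "act (inv y) (act y X) = act (inv y) (act y Y)" by simp
    have "X = act (inv y) (act y X)" using XY y act_mult[of "inv y" y X] act_one by simp
    also have "\<dots> = act (inv y) (act y Y)" using XY by simp
    also have "\<dots> = Y" using XY y act_mult[of "inv y" y Y] act_one by simp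
    finally show "X = Y" .
  qed
  have surj: "act y ` C = C" if y: "y \<in> carrier G" for y
  proof
    show "act y ` C \<subseteq> C" using act_C y by auto
    show "C \<subseteq> act y ` C"
    proof
      fix X assume X: "X \<in> C"
      have "X = act y (act (inv y) X)" using act_mult[of y "inv y" X] X y act_one by simp
      thus "X \<in> act y ` C" using act_C X y by blast
    qed
  qed
  have Vmult: "V (x \<otimes> y) = V x \<otimes> V y" if x: "x \<in> carrier G" and y: "y \<in> carrier G" for x y
  proof -
    have "V (x \<otimes> y) = finprod Zg (\<lambda>X. \<tau> x (act y X) \<otimes>\<^bsub>Zg\<^esub> \<tau> y X) C"
      unfolding V_def Zg_mult
      by (rule Zg.finprod_cong') (use \<tau>mult x y \<tau>Z act_C Zm in \<open>auto simp: Zg_def\<close>)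
    also have "\<dots> = finprod Zg (\<lambda>X. \<tau> x (act y X)) C \<otimes>\<^bsub>Zg\<^esub> finprod Zg (\<tau> y) C"
      by (rule Zg.finprod_multf) (use \<tau>Z act_C x y in \<open>auto simp: Zg_def\<close>)
    also have "finprod Zg (\<lambda>X. \<tau> x (act y X)) C = finprod Zg (\<tau> x) (act y ` C)"
      by (rule Zg.finprod_reindex[symmetric]) (use \<tau>Z act_C x y inj in \<open>auto simp: Zg_def\<close>)
    also have "\<dots> = V x" using surj y by (simp add: V_def)
    finally show ?thesis by (simp add: V_def Zg_mult)
  qed
  have Vcentral: "V z = z [^] card C" if z: "z \<in> Z" for z
  proof -
    have zG: "z \<in> carrier G" using z ZG by auto
    have "\<tau> z X = z" if X: "X \<in> C" for X
    proof -
      have r1: "rep X \<in> carrier G" "cs (rep X) = X" using rep X by auto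
      have "act z X = cs (z \<otimes> rep X)" using act_cs r1 zG by metis
      also have "\<dots> = cs (rep X \<otimes> z)" using Zc[OF z r1(1)] by simp
      also have "\<dots> = X"
        using cs_eq[of "rep X" "rep X \<otimes> z"] r1 zG z by (simp add: m_assoc[symmetric])
      finally have "act z X = X" .
      thus ?thesis unfolding \<tau>_def using r1 zG Zc[OF z, of "rep X"]
        by (simp add: m_assoc, simp add: m_assoc[symmetric])
    qed
    hence "V z = finprod Zg (\<lambda>X. z) C" unfolding V_def
      by (intro Zg.finprod_cong') (use z in \<open>auto simp: Zg_def\<close>)
    also have "\<dots> = z [^] card C" using Zg.finprod_const[of z C] z nat_pow_consistent[of z "card C" Z] by (simp add: Zg_def)
    finally show ?thesis .
  qed
  have V1: "V \<one> = \<one>" using Vcentral[OF Z1] by simp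
  have Vinv: "V x \<otimes> V (inv x) = \<one>" if "x \<in> carrier G" for x
    using Vmult[of x "inv x"] that V1 by simp
  define c where "c = g \<otimes> h \<otimes> inv g \<otimes> inv h"
  have cG: "c \<in> carrier G" using g h by (simp add: c_def)
  have Vc: "V c = \<one>"
  proof -
    have "V c = V g \<otimes> V h \<otimes> V (inv g) \<otimes> V (inv h)" using g h by (simp add: c_def Vmult)
    also have "\<dots> = (V g \<otimes> V (inv g)) \<otimes> (V h \<otimes> V (inv h))"
    proof -
      have c1: "V g \<in> carrier G" "V h \<in> carrier G" "V (inv g) \<in> carrier G" "V (inv h) \<in> carrier G"
        using VZ g h ZG by auto
      have c2: "V h \<otimes> V (inv g) = V (inv g) \<otimes> V h" using Zc[of "V h" "V (inv g)"] VZ h g c1 by simp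
      have "V g \<otimes> V h \<otimes> V (inv g) \<otimes> V (inv h) = V g \<otimes> (V h \<otimes> V (inv g)) \<otimes> V (inv h)"
        using c1 by (simp add: m_assoc)
      also have "\<dots> = V g \<otimes> (V (inv g) \<otimes> V h) \<otimes> V (inv h)" by (simp only: c2)
      also have "\<dots> = (V g \<otimes> V (inv g)) \<otimes> (V h \<otimes> V (inv h))" using c1 by (simp add: m_assoc)
      finally show ?thesis .
    qed
    also have "\<dots> = \<one>" using Vinv g h by simp
    finally show ?thesis .
  qed
  have Vpow: "V (c [^] n) = \<one>" for n :: nat
    by (induct n) (simp_all add: V1 Vmult cG Vc)
  obtain r :: nat where r: "r > 0" "c [^] r \<in> Z"
  proof -
    have "\<not> inj (\<lambda>i::nat. cs (c [^] i))"
    proof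
      assume "inj (\<lambda>i::nat. cs (c [^] i))"
      moreover have "range (\<lambda>i::nat. cs (c [^] i)) \<subseteq> C" using cG by (auto simp: C_def)
      ultimately have "finite (UNIV :: nat set)"
        using finite_imageD finite_subset finC by blast
      thus False by simp
    qed
    then obtain i j :: nat where ij: "i \<noteq> j" "cs (c [^] i) = cs (c [^] j)"
      unfolding inj_def by blast
    have key: "c [^] (b - a) \<in> Z" if "a < b" "cs (c [^] a) = cs (c [^] b)" for a b :: nat
    proof -
      have "inv (c [^] a) \<otimes> c [^] b \<in> Z" using that cs_eq cG by simp
      moreover have "c [^] b = c [^] a \<otimes> c [^] (b - a)"
        using that cG by (simp add: nat_pow_mult)
      ultimately show ?thesis using cG by (simp add: m_assoc[symmetric])
    qed
    show ?thesis
    proof (cases "i < j")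
      case True thus ?thesis using key[of i j] ij that[of "j - i"] by simp
    next
      case False hence "j < i" using ij by simp
      thus ?thesis using key[of j i] ij that[of "i - j"] by simp
    qed
  qed
  have "(c [^] r) [^] card C = \<one>" using Vcentral[OF r(2)] Vpow[of r] by simp
  hence "c [^] (r * card C) = \<one>" using cG by (simp add: nat_pow_pow)
  moreover have "card C > 0" using finC cs_mem[of \<one>] by (auto simp: C_def card_gt_0_iff)
  ultimately have "r * card C > 0 \<and> c [^] (r * card C) = \<one>" using r by simp
  thus ?thesis unfolding c_def by blast
qed


lemma (in group) centre_coset_eq:
  fixes a b
  defines "Z \<equiv> {z \<in> carrier G. \<forall>x\<in>carrier G. z \<otimes> x = x \<otimes> z}"
  assumes a: "a \<in> carrier G" and b: "b \<in> carrier G" and w: "inv a \<otimes> b \<in> Z"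
  shows "(\<lambda>z. a \<otimes> z) ` Z = (\<lambda>z. b \<otimes> z) ` Z"
proof -
  have ZG: "Z \<subseteq> carrier G" by (auto simp: Z_def)
  have Zm: "x \<otimes> y \<in> Z" if "x \<in> Z" "y \<in> Z" for x y
  proof -
    have xy: "x \<in> carrier G" "y \<in> carrier G" using that by (auto simp: Z_def)
    have "x \<otimes> y \<otimes> w = w \<otimes> (x \<otimes> y)" if w: "w \<in> carrier G" for w
    proof -
      have "x \<otimes> y \<otimes> w = x \<otimes> (w \<otimes> y)" using that xy w \<open>y \<in> Z\<close> by (simp add: m_assoc Z_def)
      also have "\<dots> = (x \<otimes> w) \<otimes> y" using xy w by (simp add: m_assoc)
      also have "\<dots> = (w \<otimes> x) \<otimes> y" using \<open>x \<in> Z\<close> w by (simp add: Z_def)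
      finally show ?thesis using xy w by (simp add: m_assoc)
    qed
    thus ?thesis using xy by (simp add: Z_def)
  qed
  have Zi: "inv x \<in> Z" if "x \<in> Z" for x
  proof -
    have x: "x \<in> carrier G" using that ZG by auto
    have "inv x \<otimes> y = y \<otimes> inv x" if y: "y \<in> carrier G" for y
    proof -
      have "x \<otimes> y = y \<otimes> x" using \<open>x \<in> Z\<close> y by (auto simp: Z_def)
      note eq = this
      have "inv x \<otimes> y = inv x \<otimes> (y \<otimes> x) \<otimes> inv x" using x y by (simp add: m_assoc)
      also have "\<dots> = inv x \<otimes> (x \<otimes> y) \<otimes> inv x" by (simp add: eq)
      also have "\<dots> = y \<otimes> inv x" using x y by (simp add: m_assoc[symmetric])
      finally show ?thesis .
    qed
    thus ?thesis using x by (auto simp: Z_def)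
  qed
  have bb: "b = a \<otimes> (inv a \<otimes> b)" using a b by (simp add: m_assoc[symmetric])
  have ab: "a = b \<otimes> inv (inv a \<otimes> b)" using a b by (simp add: inv_mult_group m_assoc[symmetric])
  show ?thesis
  proof
    show "(\<lambda>z. a \<otimes> z) ` Z \<subseteq> (\<lambda>z. b \<otimes> z) ` Z"
    proof
      fix y assume "y \<in> (\<lambda>z. a \<otimes> z) ` Z"
      then obtain z where z: "z \<in> Z" "y = a \<otimes> z" by auto
      hence "y = b \<otimes> (inv (inv a \<otimes> b) \<otimes> z)" using ab a b ZG
        by (metis inv_closed m_assoc m_closed subsetD)
      thus "y \<in> (\<lambda>z. b \<otimes> z) ` Z" using z w Zi Zm by auto
    qed
    show "(\<lambda>z. b \<otimes> z) ` Z \<subseteq> (\<lambda>z. a \<otimes> z) ` Z"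
    proof
      fix y assume "y \<in> (\<lambda>z. b \<otimes> z) ` Z"
      then obtain z where z: "z \<in> Z" "y = b \<otimes> z" by auto
      hence "y = a \<otimes> ((inv a \<otimes> b) \<otimes> z)" using bb a b ZG
        by (metis inv_closed m_assoc m_closed subsetD)
      thus "y \<in> (\<lambda>z. a \<otimes> z) ` Z" using z w Zm by auto
    qed
  qed
qed

lemma minv:
  fixes A :: "'a::field^'n^'n"
  assumes "invertible A"
  shows "A ** matrix_inv A = mat 1 \<and> matrix_inv A ** A = mat 1"
  using assms unfolding invertible_def matrix_inv_def by (rule someI_ex)

lemma minv_unique:
  fixes A B :: "'a::field^'n^'n"
  assumes "A ** B = mat 1"
  shows "matrix_inv A = B"
proof -
  have iA: "invertible A" using assms invertible_right_inverse by blast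
  have "matrix_inv A = matrix_inv A ** (A ** B)" using assms by simp
  also have "\<dots> = B" using minv[OF iA] by (simp add: matrix_mul_assoc)
  finally show ?thesis .
qed

lemma minv_invertible:
  fixes A :: "'a::field^'n^'n"
  assumes "invertible A" shows "invertible (matrix_inv A)"
  using minv[OF assms] invertible_def by blast

lemma minv_minv:
  fixes A :: "'a::field^'n^'n"
  assumes "invertible A" shows "matrix_inv (matrix_inv A) = A"
  using minv[OF assms] minv_unique by blast

lemma minv_mult:
  fixes A B :: "'a::field^'n^'n"
  assumes "invertible A" "invertible B"
  shows "matrix_inv (A ** B) = matrix_inv B ** matrix_inv A"
proof (rule minv_unique)
  have "A ** B ** (matrix_inv B ** matrix_inv A) = A ** (B ** matrix_inv B) ** matrix_inv A"
    by (simp add: matrix_mul_assoc)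
  also have "\<dots> = mat 1" using minv[OF assms(1)] minv[OF assms(2)] by simp
  finally show "A ** B ** (matrix_inv B ** matrix_inv A) = mat 1" .
qed

lemma matrix_sub_ldistrib: "(A::'a::ring_1^'n^'n) ** (B - C) = A ** B - A ** C"
  by (vector matrix_matrix_mult_def sum_subtractf[symmetric] algebra_simps)

lemma matrix_sub_rdistrib: "((B::'a::ring_1^'n^'n) - C) ** A = B ** A - C ** A"
  by (vector matrix_matrix_mult_def sum_subtractf[symmetric] algebra_simps)

lemma matrix_add_rdistrib: "((B::'a::ring_1^'n^'n) + C) ** A = B ** A + C ** A"
  by (vector matrix_matrix_mult_def sum.distrib[symmetric] algebra_simps)

lemma matrix_neg_ldistrib: "(A::'a::ring_1^'n^'n) ** (- B) = - (A ** B)"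
  by (vector matrix_matrix_mult_def sum_negf[symmetric] algebra_simps)

lemma mpow_Suc2: "mpow (A::'a::semiring_1^'n^'n) (Suc n) = mpow A n ** A"
  by (induct n) (simp_all add: matrix_mul_assoc)

definition scm :: "'a::semiring_1 \<Rightarrow> 'a^'n^'n \<Rightarrow> 'a^'n^'n" where
  "scm c M = (\<chi> i l. c * M $ i $ l)"

lemma scm_mult: "(A::'a::comm_semiring_1^'n^'n) ** scm c M = scm c (A ** M)"
  by (vector scm_def matrix_matrix_mult_def sum_distrib_left mult_ac)

lemma unip_finite_order:
  fixes A :: "'a::field_char_0^'n^'n"
  assumes k: "mpow A k = mat 1" "k > 0" and p: "mpow (A - mat 1) p = 0"
  shows "A = mat 1"
proof -
  define N where "N = A - mat 1"
  have AN: "A ** X = N ** X + X" for X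
    by (simp add: N_def matrix_sub_rdistrib)
  have claim: "mpow N (Suc q) = 0 \<Longrightarrow> N = 0" for q
  proof (induct q)
    case 0 thus ?case by simp
  next
    case (Suc q)
    define B where "B = mpow N q"
    have NNB: "N ** (N ** B) = 0" using Suc.prems by (simp add: B_def)
    have ANB: "A ** (N ** B) = N ** B" using AN[of "N ** B"] NNB by simp
    have it: "mpow A j ** B = B + scm (of_nat j) (N ** B)" for j
    proof (induct j)
      case 0
      have "scm (of_nat 0) (N ** B) = 0" by (vector scm_def)
      thus ?case by simp
    next
      case (Suc j)
      have "mpow A (Suc j) ** B = A ** (mpow A j ** B)" by (simp add: matrix_mul_assoc)
      also have "\<dots> = A ** B + scm (of_nat j) (A ** (N ** B))"
        by (simp add: Suc matrix_add_ldistrib scm_mult)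
      also have "\<dots> = B + scm (of_nat (Suc j)) (N ** B)"
        using AN[of B] ANB by (vector scm_def algebra_simps)
      finally show ?case .
    qed
    have "B = B + scm (of_nat k) (N ** B)" using it[of k] k by simp
    hence "scm (of_nat k) (N ** B) = 0" by simp
    hence "N ** B = 0" using k(2) by (vector scm_def) (metis (no_types) mult_eq_0_iff of_nat_eq_0_iff vec_lambda_beta zero_index not_gr0)
    hence "mpow N (Suc q) = 0" by (simp add: B_def)
    thus ?case using Suc.hyps by simp
  qed
  have "N = 0"
  proof (cases p)
    case 0
    hence "(mat 1 :: 'a^'n^'n) = 0" using p by simp
    hence "(mat 1 :: 'a^'n^'n) $ undefined $ undefined = 0" by simp
    thus ?thesis by (simp add: mat_def)
  next
    case (Suc q) thus ?thesis using claim p N_def by simp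
  qed
  thus ?thesis by (simp add: N_def)
qed


lemma (in group) comm_from_commutator:
  assumes g: "g \<in> carrier G" and h: "h \<in> carrier G" and c: "g \<otimes> h \<otimes> inv g \<otimes> inv h = \<one>"
  shows "g \<otimes> h = h \<otimes> g"
proof -
  have "(g \<otimes> h) \<otimes> inv (h \<otimes> g) = \<one>" using c g h by (simp add: inv_mult_group m_assoc)
  hence "inv (inv (h \<otimes> g)) = g \<otimes> h" using g h by (intro inv_equality) auto
  thus ?thesis using g h by simp
qed

definition allin :: "'a set \<Rightarrow> 'a^'n^'n \<Rightarrow> bool" where
  "allin T A \<longleftrightarrow> (\<forall>i j. A $ i $ j \<in> T)"

lemma sum_in:
  assumes "0 \<in> T" "\<And>x y. x \<in> T \<Longrightarrow> y \<in> T \<Longrightarrow> x + y \<in> T" "\<And>k. k \<in> F \<Longrightarrow> f k \<in> T"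
  shows "sum f F \<in> T"
  using assms(3) by (induct F rule: infinite_finite_induct) (auto simp: assms(1,2))

lemma allin_mult_ring:
  fixes A B :: "'a::comm_ring_1^'n^'n"
  assumes "0 \<in> R" "\<And>x y. x \<in> R \<Longrightarrow> y \<in> R \<Longrightarrow> x + y \<in> R" "\<And>x y. x \<in> R \<Longrightarrow> y \<in> R \<Longrightarrow> x * y \<in> R"
    "allin R A" "allin R B"
  shows "allin R (A ** B)"
  using assms unfolding allin_def matrix_matrix_mult_def by (auto intro!: sum_in)

lemma ideal_props:
  assumes "is_ideal R \<rho>"
  shows "0 \<in> \<rho>" "\<And>x y. x \<in> \<rho> \<Longrightarrow> y \<in> \<rho> \<Longrightarrow> x + y \<in> \<rho>" "\<And>x. x \<in> \<rho> \<Longrightarrow> - x \<in> \<rho>"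
    "\<And>r x. r \<in> R \<Longrightarrow> x \<in> \<rho> \<Longrightarrow> r * x \<in> \<rho>" "\<rho> \<subseteq> R"
  using assms unfolding is_ideal_def by auto

lemma ideal_mult_l:
  fixes X Y :: "'a::comm_ring_1^'n^'n"
  assumes I: "is_ideal R \<rho>" and "allin \<rho> X" "allin R Y"
  shows "allin \<rho> (Y ** X)"
  using assms ideal_props[OF I] unfolding allin_def matrix_matrix_mult_def
  by (auto intro!: sum_in)

lemma ideal_mult_r:
  fixes X Y :: "'a::comm_ring_1^'n^'n"
  assumes I: "is_ideal R \<rho>" and "allin \<rho> X" "allin R Y"
  shows "allin \<rho> (X ** Y)"
  using assms ideal_props[OF I] unfolding allin_def matrix_matrix_mult_def
  by (auto intro!: sum_in simp: mult.commute[of "X $ _ $ _"])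

lemma ideal_add:
  fixes X Y :: "'a::comm_ring_1^'n^'n"
  assumes I: "is_ideal R \<rho>" and "allin \<rho> X" "allin \<rho> Y"
  shows "allin \<rho> (X + Y)"
  using assms ideal_props[OF I] unfolding allin_def by auto

lemma ideal_neg:
  fixes X :: "'a::comm_ring_1^'n^'n"
  assumes I: "is_ideal R \<rho>" and "allin \<rho> X"
  shows "allin \<rho> (- X)"
  using assms ideal_props[OF I] unfolding allin_def by auto

lemma kerL1:
  fixes A B :: "'a::comm_ring_1^'n^'n"
  assumes I: "is_ideal R \<rho>" and "allin \<rho> (A - mat 1)" "allin \<rho> (B - mat 1)" "allin R B"
  shows "allin \<rho> (A ** B - mat 1)"
proof -
  have "A ** B - mat 1 = (A - mat 1) ** B + (B - mat 1)"
    by (simp add: matrix_sub_rdistrib)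
  thus ?thesis using assms ideal_add ideal_mult_r by metis
qed

lemma kerL2:
  fixes A B Bi :: "'a::comm_ring_1^'n^'n"
  assumes I: "is_ideal R \<rho>" and "allin \<rho> (A - mat 1)" "allin R B" "allin R Bi" "B ** Bi = mat 1"
  shows "allin \<rho> (B ** A ** Bi - mat 1)"
proof -
  have "B ** A ** Bi - mat 1 = B ** (A - mat 1) ** Bi"
    using assms(5) by (simp add: matrix_sub_rdistrib matrix_sub_ldistrib)
  thus ?thesis using assms ideal_mult_l ideal_mult_r by metis
qed

lemma kerL3:
  fixes A Ai :: "'a::comm_ring_1^'n^'n"
  assumes I: "is_ideal R \<rho>" and "allin \<rho> (A - mat 1)" "allin R Ai" "Ai ** A = mat 1"
  shows "allin \<rho> (Ai - mat 1)"
proof -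
  have "Ai - mat 1 = - (Ai ** (A - mat 1))"
    using assms(4) by (simp add: matrix_sub_ldistrib)
  thus ?thesis using assms ideal_mult_l ideal_neg by metis
qed

lemma psi_kernel_iff: "A \<in> psi_kernel \<rho> M \<longleftrightarrow> A \<in> M \<and> allin \<rho> (A - mat 1)"
  by (simp add: psi_kernel_def allin_def)

lemma subring_gen_props:
  shows "X \<subseteq> subring_gen X" "1 \<in> subring_gen X"
    "\<And>x y. x \<in> subring_gen X \<Longrightarrow> y \<in> subring_gen X \<Longrightarrow> x + y \<in> subring_gen X"
    "\<And>x y. x \<in> subring_gen X \<Longrightarrow> y \<in> subring_gen X \<Longrightarrow> x - y \<in> subring_gen X"
    "\<And>x y. x \<in> subring_gen X \<Longrightarrow> y \<in> subring_gen X \<Longrightarrow> x * y \<in> subring_gen X"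
  unfolding subring_gen_def by auto

lemma group_gen_props:
  shows "mat 1 \<in> group_gen S" "S \<subseteq> group_gen S"
    "\<And>x y. x \<in> group_gen S \<Longrightarrow> y \<in> group_gen S \<Longrightarrow> x ** y \<in> group_gen S"
    "\<And>x. x \<in> group_gen S \<Longrightarrow> matrix_inv x \<in> group_gen S"
  unfolding group_gen_def by auto

lemma group_gen_least:
  assumes "S \<subseteq> H" "mat 1 \<in> H" "\<And>x y. x \<in> H \<Longrightarrow> y \<in> H \<Longrightarrow> x ** y \<in> H"
    "\<And>x. x \<in> H \<Longrightarrow> matrix_inv x \<in> H"
  shows "group_gen S \<subseteq> H"
  unfolding group_gen_def by (rule Inter_lower) (use assms in simp)


theorem corollary5p8:
  fixes S :: "('a::field_char_0^'n^'n) set" and \<rho> :: "'a set"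
  assumes "finite S" and "S \<subseteq> GL_field"
    and "R = subring_gen (entries (S \<union> matrix_inv ` S))"
    and "G = group_gen S"
    and "is_ideal R \<rho>"
    and "SW_hom R \<rho> TYPE('n)"
  shows "central_by_finite G \<longleftrightarrow> psi_kernel \<rho> G \<subseteq> centre G"
proof -
  note Rdef = assms(3) and Gdef = assms(4) and I = assms(5)
  have R1: "1 \<in> R" and Radd: "\<And>x y. x \<in> R \<Longrightarrow> y \<in> R \<Longrightarrow> x + y \<in> R"
    and Rmul: "\<And>x y. x \<in> R \<Longrightarrow> y \<in> R \<Longrightarrow> x * y \<in> R"
    and Rdiff: "\<And>x y. x \<in> R \<Longrightarrow> y \<in> R \<Longrightarrow> x - y \<in> R"
    and Rent: "entries (S \<union> matrix_inv ` S) \<subseteq> R"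
    using subring_gen_props[where X="entries (S \<union> matrix_inv ` S)"] Rdef by auto
  have R0: "0 \<in> R" using Rdiff[OF R1 R1] by simp
  have allinR_mult: "allin R (A ** B)" if "allin R A" "allin R B" for A B :: "'a^'n^'n"
    using allin_mult_ring[OF R0 Radd Rmul that] .
  have allinR_1: "allin R (mat 1 :: 'a^'n^'n)" using R0 R1 by (simp add: allin_def mat_def)
  have GLR: "A \<in> GL_ring R \<longleftrightarrow> invertible A \<and> allin R A \<and> allin R (matrix_inv A)" for A :: "'a^'n^'n"
    by (simp add: GL_ring_def allin_def)
  have SH: "S \<subseteq> GL_ring R"
  proof
    fix A assume A: "A \<in> S"
    have "invertible A" using A assms(2) by (auto simp: GL_field_def)
    moreover have "allin R A" using A Rent by (auto simp: allin_def entries_def)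
    moreover have "allin R (matrix_inv A)" using A Rent by (auto simp: allin_def entries_def)
    ultimately show "A \<in> GL_ring R" using GLR by blast
  qed
  have GH: "G \<subseteq> GL_ring R" unfolding Gdef
  proof (rule group_gen_least[OF SH])
    have "matrix_inv (mat 1 :: 'a^'n^'n) = mat 1" by (rule minv_unique) simp
    moreover have "invertible (mat 1 :: 'a^'n^'n)" using invertible_def by fastforce
    ultimately show "(mat 1 :: 'a^'n^'n) \<in> GL_ring R" using GLR allinR_1 by simp
  next
    fix x y :: "'a^'n^'n" assume "x \<in> GL_ring R" "y \<in> GL_ring R"
    thus "x ** y \<in> GL_ring R" using GLR invertible_mult minv_mult allinR_mult by metis
  next
    fix x :: "'a^'n^'n" assume "x \<in> GL_ring R"
    thus "matrix_inv x \<in> GL_ring R" using GLR minv_invertible minv_minv by metis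
  qed
  have G1: "mat 1 \<in> G" and Gmul: "\<And>x y. x \<in> G \<Longrightarrow> y \<in> G \<Longrightarrow> x ** y \<in> G"
    and Ginv: "\<And>x. x \<in> G \<Longrightarrow> matrix_inv x \<in> G"
    using group_gen_props[where S=S] Gdef by auto
  have Ginvt: "\<And>x. x \<in> G \<Longrightarrow> invertible x" using GH GLR by blast
  define Gg :: "('a^'n^'n) monoid" where "Gg = \<lparr>carrier = G, mult = (\<lambda>x y. x ** y), one = mat 1\<rparr>"
  have grp: "group Gg"
  proof (rule groupI)
    show "\<And>x y. x \<in> carrier Gg \<Longrightarrow> y \<in> carrier Gg \<Longrightarrow> x \<otimes>\<^bsub>Gg\<^esub> y \<in> carrier Gg"
      using Gmul by (simp add: Gg_def)
    show "\<one>\<^bsub>Gg\<^esub> \<in> carrier Gg" using G1 by (simp add: Gg_def)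
    show "\<And>x y z. x \<in> carrier Gg \<Longrightarrow> y \<in> carrier Gg \<Longrightarrow> z \<in> carrier Gg \<Longrightarrow>
      x \<otimes>\<^bsub>Gg\<^esub> y \<otimes>\<^bsub>Gg\<^esub> z = x \<otimes>\<^bsub>Gg\<^esub> (y \<otimes>\<^bsub>Gg\<^esub> z)"
      by (simp add: Gg_def matrix_mul_assoc)
    show "\<And>x. x \<in> carrier Gg \<Longrightarrow> \<one>\<^bsub>Gg\<^esub> \<otimes>\<^bsub>Gg\<^esub> x = x" by (simp add: Gg_def)
    show "\<exists>y\<in>carrier Gg. y \<otimes>\<^bsub>Gg\<^esub> x = \<one>\<^bsub>Gg\<^esub>" if "x \<in> carrier Gg" for x
      using that Ginv minv[OF Ginvt] by (auto simp: Gg_def)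
  qed
  have Gg_one: "\<one>\<^bsub>Gg\<^esub> = mat 1" by (simp add: Gg_def)
  have Gg_carr: "carrier Gg = G" by (simp add: Gg_def)
  have Gg_mul: "x \<otimes>\<^bsub>Gg\<^esub> y = x ** y" for x y by (simp add: Gg_def)
  have Gg_inv: "inv\<^bsub>Gg\<^esub> x = matrix_inv x" if "x \<in> G" for x
    using that Ginv minv[OF Ginvt[OF that]] by (intro group.inv_equality[OF grp]) (auto simp: Gg_def)
  have Gg_pow: "x [^]\<^bsub>Gg\<^esub> (k::nat) = mpow x k" for x k
    by (induct k) (simp_all add: Gg_def mpow_Suc2 del: mpow.simps(2))
  show ?thesis
  proof
    assume cbf: "central_by_finite G"
    have finGg: "finite ((\<lambda>x. (\<lambda>z. x \<otimes>\<^bsub>Gg\<^esub> z) `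
        {z \<in> carrier Gg. \<forall>x\<in>carrier Gg. z \<otimes>\<^bsub>Gg\<^esub> x = x \<otimes>\<^bsub>Gg\<^esub> z}) ` carrier Gg)"
      using cbf by (simp add: central_by_finite_def centre_def Gg_def)
    show "psi_kernel \<rho> G \<subseteq> centre G"
    proof
      fix g assume gk: "g \<in> psi_kernel \<rho> G"
      hence gG: "g \<in> G" and g\<rho>: "allin \<rho> (g - mat 1)" by (auto simp: psi_kernel_iff)
      have "g ** h = h ** g" if hG: "h \<in> G" for h
      proof -
        obtain k :: nat where k: "k > 0"
          "(g \<otimes>\<^bsub>Gg\<^esub> h \<otimes>\<^bsub>Gg\<^esub> inv\<^bsub>Gg\<^esub> g \<otimes>\<^bsub>Gg\<^esub> inv\<^bsub>Gg\<^esub> h) [^]\<^bsub>Gg\<^esub> k = \<one>\<^bsub>Gg\<^esub>"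
          using group.transfer_torsion[OF grp finGg, of g h] gG hG by (auto simp: Gg_def)
        define c where "c = g ** h ** matrix_inv g ** matrix_inv h"
        have cdef: "g \<otimes>\<^bsub>Gg\<^esub> h \<otimes>\<^bsub>Gg\<^esub> inv\<^bsub>Gg\<^esub> g \<otimes>\<^bsub>Gg\<^esub> inv\<^bsub>Gg\<^esub> h = c"
          using gG hG by (simp add: Gg_inv c_def) (simp add: Gg_def)
        have ck: "mpow c k = mat 1" using k(2) cdef Gg_pow by (simp add: Gg_def)
        have cG: "c \<in> G" using gG hG Gmul Ginv by (simp add: c_def)
        have gR: "allin R g" "allin R (matrix_inv g)" "invertible g" using gG GH GLR by auto
        have hR: "allin R h" "allin R (matrix_inv h)" "invertible h" using hG GH GLR by auto
        have gi\<rho>: "allin \<rho> (matrix_inv g - mat 1)"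
          using kerL3[OF I g\<rho> gR(2)] minv[OF gR(3)] by simp
        define K where "K = h ** matrix_inv g ** matrix_inv h"
        have K\<rho>: "allin \<rho> (K - mat 1)"
          using kerL2[OF I gi\<rho> hR(1) hR(2)] minv[OF hR(3)] by (simp add: K_def)
        have KR: "allin R K" using hR gR allinR_mult by (simp add: K_def)
        have "c = g ** K" by (simp add: c_def K_def matrix_mul_assoc)
        hence c\<rho>: "allin \<rho> (c - mat 1)" using kerL1[OF I g\<rho> K\<rho> KR] by simp
        have "c \<in> psi_kernel \<rho> (GL_ring R)" using cG GH c\<rho> by (auto simp: psi_kernel_iff)
        moreover have "finite_order c" using ck k(1) by (auto simp: finite_order_def)
        ultimately have "unipotent c" using assms(6) by (auto simp: SW_hom_def)
        then obtain p where "mpow (c - mat 1) p = 0" by (auto simp: unipotent_def)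
        hence "c = mat 1" using unip_finite_order[OF ck k(1)] by simp
        hence "g \<otimes>\<^bsub>Gg\<^esub> h \<otimes>\<^bsub>Gg\<^esub> inv\<^bsub>Gg\<^esub> g \<otimes>\<^bsub>Gg\<^esub> inv\<^bsub>Gg\<^esub> h = \<one>\<^bsub>Gg\<^esub>"
          using cdef Gg_one by simp
        hence "g \<otimes>\<^bsub>Gg\<^esub> h = h \<otimes>\<^bsub>Gg\<^esub> g"
          using group.comm_from_commutator[OF grp, of g h] gG hG Gg_carr by simp
        thus ?thesis by (simp add: Gg_mul)
      qed
      thus "g \<in> centre G" using gG by (simp add: centre_def)
    qed
  next
    assume sub: "psi_kernel \<rho> G \<subseteq> centre G"
    define Q where "Q = quot_ring_carrier R \<rho>"
    have finQ: "finite Q" using assms(6) by (simp add: SW_hom_def Q_def)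
    define red where "red g = (\<lambda>i j. {y \<in> R. g $ i $ j - y \<in> \<rho>})" for g :: "'a^'n^'n"
    define cs where "cs g = (\<lambda>z. g ** z) ` centre G" for g :: "'a^'n^'n"
    have "red ` G \<subseteq> PiE UNIV (\<lambda>_. PiE UNIV (\<lambda>_. Q))"
    proof
      fix f assume "f \<in> red ` G"
      then obtain g where g: "g \<in> G" "f = red g" by auto
      have "allin R g" using g GH GLR by auto
      hence "red g i j \<in> Q" for i j unfolding Q_def quot_ring_carrier_def red_def allin_def by auto
      thus "f \<in> PiE UNIV (\<lambda>_. PiE UNIV (\<lambda>_. Q))" using g by (simp add: PiE_UNIV_domain)
    qed
    hence finred: "finite (red ` G)" by (rule finite_subset) (simp add: finite_PiE finQ)
    have key: "cs g = cs h" if g: "g \<in> G" and h: "h \<in> G" and eq: "red g = red h" for g h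
    proof -
      have gR: "allin R g" "allin R (matrix_inv g)" "invertible g" using g GH GLR by auto
      have hR: "allin R h" using h GH GLR by auto
      have 0: "0 \<in> \<rho>" using ideal_props[OF I] by simp
      have "allin \<rho> (g - h)" unfolding allin_def
      proof (intro allI)
        fix i j
        have "h $ i $ j \<in> red h i j" using hR 0 by (simp add: red_def allin_def)
        hence "h $ i $ j \<in> red g i j" using eq by simp
        thus "(g - h) $ i $ j \<in> \<rho>" by (simp add: red_def)
      qed
      hence "allin \<rho> (- (matrix_inv g ** (g - h)))" using ideal_mult_l[OF I _ gR(2)] ideal_neg[OF I] by blast
      moreover have "- (matrix_inv g ** (g - h)) = matrix_inv g ** h - mat 1"
        using minv[OF gR(3)] by (simp add: matrix_sub_ldistrib)
      ultimately have "allin \<rho> (matrix_inv g ** h - mat 1)" by simp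
      moreover have "matrix_inv g ** h \<in> G" using g h Gmul Ginv by simp
      ultimately have "matrix_inv g ** h \<in> centre G" using sub by (auto simp: psi_kernel_iff)
      hence "inv\<^bsub>Gg\<^esub> g \<otimes>\<^bsub>Gg\<^esub> h \<in> {z \<in> carrier Gg. \<forall>x\<in>carrier Gg. z \<otimes>\<^bsub>Gg\<^esub> x = x \<otimes>\<^bsub>Gg\<^esub> z}"
        using Gg_inv[OF g] by (simp add: centre_def Gg_def)
      from group.centre_coset_eq[OF grp _ _ this] g h
      show ?thesis by (simp add: cs_def centre_def Gg_def)
    qed
    define \<phi> where "\<phi> f = cs (SOME g. g \<in> G \<and> red g = f)" for f
    have "cs ` G \<subseteq> \<phi> ` (red ` G)"
    proof
      fix X assume "X \<in> cs ` G"
      then obtain g where g: "g \<in> G" "X = cs g" by auto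
      define g' where "g' = (SOME g'. g' \<in> G \<and> red g' = red g)"
      have "\<exists>g'. g' \<in> G \<and> red g' = red g" using g by blast
      hence g': "g' \<in> G \<and> red g' = red g" unfolding g'_def by (rule someI_ex)
      have "\<phi> (red g) = cs g'" by (simp add: \<phi>_def g'_def)
      also have "\<dots> = cs g" using key[of g' g] g' g by blast
      finally have "\<phi> (red g) = X" using g by simp
      thus "X \<in> \<phi> ` (red ` G)" using g by blast
    qed
    hence "finite (cs ` G)" using finred by (meson finite_imageI finite_subset)
    thus "central_by_finite G" by (simp add: central_by_finite_def cs_def)
  qed
qed

end
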